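(* Let $W\in\{\mathrm{A}_{\frac12\infty},\mathrm{D}_{\frac12\infty}\}$ and let $f_W:\mathbb{C}^2\to\mathbb{C}$ be the entire function defined below. Then the set of critical values of $f_W$ is $\{0,1\}$; that is, the set $C_W$ of critical points of $f_W$ is contained in $f_W^{-1}(0)\cup f_W^{-1}(1)$, and both values are attained at critical points.
   Context: Let $s(x)=\frac{\sin\sqrt{x}}{\sqrt{x}}=\prod_{n\ge1}\big(1-\frac{x}{n^2\pi^2}\big)$ and $c(x)=\cos\sqrt{x}=\prod_{n\ge1}\big(1-\frac{4x}{(2n-1)^2\pi^2}\big)$, entire functions of $x\in\mathbb{C}$ (real on $\mathbb{R}$), satisfying $xs(x)^2+c(x)^2=1$. Define $f_{\mathrm{A}_{\frac12\infty}}(x,y)=xs(x)^2-y^2=1-c(x)^2-y^2$ and $f_{\mathrm{D}_{\frac12\infty}}(x,y)=xs(x)^2-xy^2=1-c(x)^2-xy^2$ on $\mathbb{C}^2$. *)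

theory Defs
  imports "HOL-Analysis.Analysis"
begin

text \<open>s(x) = sin(sqrt x)/sqrt x (removable singularity at 0 filled by 1), c(x) = cos(sqrt x).
  Both are independent of the branch of the square root.\<close>
definition s_fun :: "complex \<Rightarrow> complex" where
  "s_fun x = (if x = 0 then 1 else sin (csqrt x) / csqrt x)"

definition c_fun :: "complex \<Rightarrow> complex" where
  "c_fun x = cos (csqrt x)"

definition f_A :: "complex \<times> complex \<Rightarrow> complex" where
  "f_A p = fst p * (s_fun (fst p))^2 - (snd p)^2"

definition f_D :: "complex \<times> complex \<Rightarrow> complex" where
  "f_D p = fst p * (s_fun (fst p))^2 - fst p * (snd p)^2"

definition critical_points :: "(complex \<times> complex \<Rightarrow> complex) \<Rightarrow> (complex \<times> complex) set" where
  "critical_points f = {p. (f has_derivative (\<lambda>h. 0)) (at p)}"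

definition critical_values :: "(complex \<times> complex \<Rightarrow> complex) \<Rightarrow> complex set" where
  "critical_values f = f ` critical_points f"

end

theory Submission
  imports Defs
begin

definition cc :: "nat \<Rightarrow> complex" where "cc n = of_real (cos_coeff (2*n))"
definition sc :: "nat \<Rightarrow> complex" where "sc n = of_real (sin_coeff (2*n+1))"
definition CC :: "complex \<Rightarrow> complex" where "CC x = (\<Sum>n. cc n * x^n)"
definition SS :: "complex \<Rightarrow> complex" where "SS x = (\<Sum>n. sc n * x^n)"

lemma cos_sums: "(\<lambda>n. cc n * (w^2)^n) sums cos w"
proof -
  have "(\<lambda>n. cos_coeff n *\<^sub>R w^n) sums cos w" by (rule cos_converges)
  moreover have "strict_mono (\<lambda>n::nat. 2*n)" by (simp add: strict_mono_def)
  moreover have "\<And>n. n \<notin> range (\<lambda>n::nat. 2*n) \<Longrightarrow> cos_coeff n *\<^sub>R w^n = 0"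
    by (auto simp: cos_coeff_def elim!: evenE)
  ultimately have "(\<lambda>n. cos_coeff (2*n) *\<^sub>R w^(2*n)) sums cos w"
    using sums_mono_reindex[of "\<lambda>n::nat. 2*n" "\<lambda>n. cos_coeff n *\<^sub>R w^n"] by auto
  moreover have "\<And>n. cos_coeff (2*n) *\<^sub>R w^(2*n) = cc n * (w^2)^n"
    by (simp add: cc_def scaleR_conv_of_real power_mult)
  ultimately show ?thesis by simp
qed

lemma sin_sums: "(\<lambda>n. w * (sc n * (w^2)^n)) sums sin w"
proof -
  have "(\<lambda>n. sin_coeff n *\<^sub>R w^n) sums sin w" by (rule sin_converges)
  moreover have "strict_mono (\<lambda>n::nat. 2*n+1)" by (simp add: strict_mono_def)
  moreover have "\<And>n. n \<notin> range (\<lambda>n::nat. 2*n+1) \<Longrightarrow> sin_coeff n *\<^sub>R w^n = 0"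
    by (auto simp: sin_coeff_def elim!: oddE)
  ultimately have "(\<lambda>n. sin_coeff (2*n+1) *\<^sub>R w^(2*n+1)) sums sin w"
    using sums_mono_reindex[of "\<lambda>n::nat. 2*n+1" "\<lambda>n. sin_coeff n *\<^sub>R w^n"] by auto
  moreover have "\<And>n. sin_coeff (2*n+1) *\<^sub>R w^(2*n+1) = w * (sc n * (w^2)^n)"
    by (simp add: sc_def scaleR_conv_of_real power_mult)
  ultimately show ?thesis by simp
qed

lemma CC_sq: "CC (w^2) = cos w"
  unfolding CC_def using cos_sums sums_unique by metis

lemma SS_sq: "w * SS (w^2) = sin w"
proof (cases "w = 0")
  case True
  then show ?thesis by simp
next
  case False
  have "(\<lambda>n. w * (sc n * (w^2)^n) / w) sums (sin w / w)"
    using sums_divide[OF sin_sums] by blast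
  then have "(\<lambda>n. sc n * (w^2)^n) sums (sin w / w)" using False by simp
  then have "SS (w^2) = sin w / w" unfolding SS_def using sums_unique by metis
  then show ?thesis using False by simp
qed

lemma CC_summable: "summable (\<lambda>n. cc n * y^n)"
proof -
  have "y = (csqrt y)^2" by simp
  then show ?thesis using cos_sums[of "csqrt y"] sums_summable by metis
qed

lemma SS_sums: "(\<lambda>n. sc n * y^n) sums SS y"
proof (cases "y = 0")
  case True
  have "(\<lambda>n. sc n * y^n) sums (\<Sum>n<1. sc n * y^n)"
    by (rule sums_finite) (auto simp: True)
  moreover have "SS y = (\<Sum>n<1. sc n * y^n)"
    unfolding SS_def by (rule suminf_finite[of "{..<1}"]) (auto simp: True)
  ultimately show ?thesis by simp
next
  case False
  define w where "w = csqrt y"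
  have y: "y = w^2" by (simp add: w_def)
  have w0: "w \<noteq> 0" using False y by auto
  have "(\<lambda>n. w * (sc n * (w^2)^n) / w) sums (sin w / w)"
    using sums_divide[OF sin_sums] by blast
  then have "(\<lambda>n. sc n * y^n) sums (sin w / w)" using w0 y by simp
  then show ?thesis unfolding SS_def using sums_unique by metis
qed

lemma diffs_cc: "diffs cc n = - (1/2) * sc n"
proof -
  have "cos_coeff (2*(Suc n)) = - sin_coeff (2*n+1) / real (2*n+2)"
    using cos_coeff_Suc[of "2*n+1"] by simp
  then have R: "real (Suc n) * cos_coeff (2*Suc n) = -(1/2) * sin_coeff(2*n+1)"
    by (simp add: field_simps)
  have "(of_real (real (Suc n) * cos_coeff (2*Suc n)) :: complex) = of_real (-(1/2) * sin_coeff(2*n+1))"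
    using R by simp
  then show ?thesis
    by (simp add: diffs_def cc_def sc_def del: of_real_mult) (metis of_real_1 of_real_add of_real_mult of_real_of_nat_eq)
qed

lemma CC_deriv: "(CC has_field_derivative (- SS x / 2)) (at x)"
proof -
  have "(CC has_field_derivative (\<Sum>n. diffs cc n * x^n)) (at x)"
    unfolding CC_def[abs_def] by (rule termdiffs_strong_converges_everywhere[OF CC_summable])
  moreover have "(\<lambda>n. diffs cc n * x^n) sums (- (1/2) * SS x)"
    unfolding diffs_cc using sums_mult[OF SS_sums, of "-(1/2)" x] by (simp add: mult.assoc)
  ultimately show ?thesis using sums_unique by (metis divide_minus_left mult_minus_left times_divide_eq_left mult_1)
qed

lemma c_fun_eq: "c_fun x = CC x"
  unfolding c_fun_def using CC_sq[of "csqrt x"] by simp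

lemma s_fun_eq: "s_fun x = SS x"
proof (cases "x = 0")
  case True
  have "SS 0 = sc 0" using SS_sums[of 0] sums_unique by (metis SS_def powser_zero)
  then show ?thesis using True by (simp add: s_fun_def sc_def sin_coeff_def)
next
  case False
  then have "csqrt x \<noteq> 0" by auto
  then show ?thesis using SS_sq[of "csqrt x"] False by (simp add: s_fun_def field_simps)
qed

lemma G_eq: "x * SS x ^2 = 1 - CC x ^2"
proof -
  define w where "w = csqrt x"
  have x: "x = w^2" by (simp add: w_def)
  have "x * SS x ^2 = (w * SS (w^2))^2" using x by (simp add: power_mult_distrib)
  also have "\<dots> = sin w ^2" using SS_sq by simp
  also have "\<dots> = 1 - cos w ^2" by (simp add: sin_squared_eq)
  finally show ?thesis using x CC_sq by simp
qed

lemma CCfst_deriv: "((\<lambda>p::complex\<times>complex. CC (fst p)) has_derivative (\<lambda>h. (- SS (fst p) / 2) * fst h)) (at p)"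
proof -
  have "((\<lambda>p::complex\<times>complex. CC (fst p)) has_derivative (\<lambda>h. - (SS (fst p) * fst h / 2))) (at p)"
    using has_derivative_compose[OF has_derivative_fst[OF has_derivative_ident] CC_deriv[unfolded has_field_derivative_def], of p UNIV]
    by simp
  then show ?thesis by (simp add: mult.commute)
qed

lemma fA_eq: "f_A = (\<lambda>p. 1 - CC (fst p)^2 - (snd p)^2)"
  by (auto simp: fun_eq_iff f_A_def s_fun_eq G_eq)

lemma fD_eq: "f_D = (\<lambda>p. 1 - CC (fst p)^2 - fst p * (snd p)^2)"
  by (auto simp: fun_eq_iff f_D_def s_fun_eq G_eq)

lemma fA_deriv: "(f_A has_derivative (\<lambda>h. CC (fst p) * SS (fst p) * fst h - 2 * snd p * snd h)) (at p)"
proof -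
  have "((\<lambda>p. 1 - CC (fst p)*CC (fst p) - snd p * snd p) has_derivative
     (\<lambda>h. 0 - (CC (fst p) * ((- SS (fst p) / 2) * fst h) + ((- SS (fst p) / 2) * fst h) * CC (fst p)) - (snd p * snd h + snd h * snd p))) (at p)"
    by (intro has_derivative_diff has_derivative_const has_derivative_mult CCfst_deriv
        has_derivative_snd has_derivative_ident)
  then show ?thesis unfolding fA_eq by (simp add: algebra_simps power2_eq_square)
qed

lemma fD_deriv: "(f_D has_derivative (\<lambda>h. (CC (fst p) * SS (fst p) - (snd p)^2) * fst h - 2 * fst p * snd p * snd h)) (at p)"
proof -
  have "((\<lambda>p. 1 - CC (fst p)*CC (fst p) - fst p * (snd p * snd p)) has_derivative
     (\<lambda>h. 0 - (CC (fst p) * ((- SS (fst p) / 2) * fst h) + ((- SS (fst p) / 2) * fst h) * CC (fst p)) -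
        (fst p * (snd p * snd h + snd h * snd p) + fst h * (snd p * snd p)))) (at p)"
    by (intro has_derivative_diff has_derivative_const has_derivative_mult CCfst_deriv
        has_derivative_snd has_derivative_fst has_derivative_ident)
  then show ?thesis unfolding fD_eq by (simp add: algebra_simps power2_eq_square)
qed

lemma crit_zero:
  assumes "(f has_derivative (\<lambda>h. 0)) (at p)" "(f has_derivative D) (at p)"
  shows "D h = 0"
  using has_derivative_unique[OF assms] by metis

lemma SS0: "SS 0 = 1"
  using s_fun_eq[of 0] by (simp add: s_fun_def)

lemma pt1: "CC (of_real ((pi/2)^2)) = 0"
  using CC_sq[of "of_real (pi/2)"] by (simp add: cos_of_real)

lemma pt0: "SS (of_real (pi^2)) = 0"
proof -
  have e: "of_real pi * SS ((of_real pi)^2) = sin (of_real pi)" by (rule SS_sq)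
  have "sin (complex_of_real pi) = 0" by (simp add: sin_of_real)
  with e have "of_real pi * SS ((of_real pi)^2) = 0" by simp
  moreover have "(of_real pi :: complex) \<noteq> 0" by simp
  ultimately show ?thesis by (simp add: of_real_power)
qed

lemma fA_crit_at: "SS x = 0 \<or> CC x = 0 \<Longrightarrow> (x, 0) \<in> critical_points f_A"
  using fA_deriv[of "(x,0)"] unfolding critical_points_def by auto

lemma fD_crit_at: "SS x = 0 \<or> CC x = 0 \<Longrightarrow> (x, 0) \<in> critical_points f_D"
  using fD_deriv[of "(x,0)"] unfolding critical_points_def by auto

theorem theorem1:
  shows "critical_values f_A = {0, 1} \<and> critical_values f_D = {0, 1}"
proof -
  have A1: "f_A p \<in> {0,1}" if "p \<in> critical_points f_A" for p
  proof -
    obtain x y where p: "p = (x,y)" by fastforce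
    have z: "(f_A has_derivative (\<lambda>h. 0)) (at p)" using that by (simp add: critical_points_def)
    have "CC x * SS x = 0" using crit_zero[OF z fA_deriv, of "(1,0)"] p by simp
    moreover have "y = 0" using crit_zero[OF z fA_deriv, of "(0,1)"] p by simp
    ultimately show ?thesis using p G_eq[of x]
      by (auto simp: f_A_def s_fun_eq)
  qed
  have D1: "f_D p \<in> {0,1}" if "p \<in> critical_points f_D" for p
  proof -
    obtain x y where p: "p = (x,y)" by fastforce
    have z: "(f_D has_derivative (\<lambda>h. 0)) (at p)" using that by (simp add: critical_points_def)
    have e1: "CC x * SS x - y^2 = 0" using crit_zero[OF z fD_deriv, of "(1,0)"] p by simp
    have e2: "x * y = 0" using crit_zero[OF z fD_deriv, of "(0,1)"] p by simp
    show ?thesis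
    proof (cases "x = 0")
      case True then show ?thesis using p by (simp add: f_D_def)
    next
      case False
      then have "y = 0" using e2 by simp
      then show ?thesis using p e1 G_eq[of x] by (auto simp: f_D_def s_fun_eq)
    qed
  qed
  have a0: "f_A (of_real (pi^2), 0) = 0" by (simp add: f_A_def s_fun_eq pt0 del: of_real_power)
  have a1: "f_A (of_real ((pi/2)^2), 0) = 1" using G_eq[of "of_real ((pi/2)^2)"] by (simp add: f_A_def s_fun_eq pt1 del: of_real_power)
  have d0: "f_D (of_real (pi^2), 0) = 0" by (simp add: f_D_def s_fun_eq pt0 del: of_real_power)
  have d1: "f_D (of_real ((pi/2)^2), 0) = 1" using G_eq[of "of_real ((pi/2)^2)"] by (simp add: f_D_def s_fun_eq pt1 del: of_real_power)
  have "critical_values f_A = {0,1}"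
    unfolding critical_values_def
    using A1 a0 a1 fA_crit_at[of "of_real (pi^2)"] fA_crit_at[of "of_real ((pi/2)^2)"] pt0 pt1
    by (auto intro: rev_image_eqI)
  moreover have "critical_values f_D = {0,1}"
    unfolding critical_values_def
    using D1 d0 d1 fD_crit_at[of "of_real (pi^2)"] fD_crit_at[of "of_real ((pi/2)^2)"] pt0 pt1
    by (auto intro: rev_image_eqI)
  ultimately show ?thesis ..
qed

end
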